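(* There exists a universal constant $c>0$ such that the following holds. For any base class $\mathcal F\subseteq\{0,1\}^{\{0,1\}^*}$, thinking length $T$ and number of thinkers $\kappa$, the rule $\kappa$-$\mathrm{Cons}_{\mathrm{CoT}}$ learns the class $\mathrm{e2e}^T(\mathcal F)$ from the CoT supervision of $\kappa$ thinkers under Instance-Dependent Sampling (with unknown identities) with sample complexity $$m(\epsilon,\delta)\le c\left(\frac{\mathrm{VCdim}(\mathcal L^T_{\mathrm{CoT}}(\mathcal F;\kappa))\log(1/\epsilon)+\log(1/\delta)}{\epsilon}\right),$$ where $\mathrm{VCdim}(\mathcal L^T_{\mathrm{CoT}}(\mathcal F;\kappa))\le c\,\kappa\cdot\mathrm{VCdim}(\mathcal F)\cdot\log(\kappa T)$.
   Context: Autoregressive generation: for $f:\{0,1\}^*\to\{0,1\}$, $\bar f(x)=(x,f(x))$; $\mathrm{e2e}^T_f(x)$ is the last bit of $\bar f^{\circ T}(x)$ and $\mathrm{CoT}^T_f(x)=(\mathrm{e2e}^1_f(x),\dots,\mathrm{e2e}^T_f(x))$; $\mathrm{e2e}^T(\mathcal F)=\{\mathrm{e2e}^T_f:f\in\mathcal F\}$. Instance-Dependent Sampling (unknown identities): an adversary chooses a distribution $\mathcal D$ on a domain $\mathcal X\subseteq\{0,1\}^*$, $h_*\in\mathrm{e2e}^T(\mathcal F)$, thinkers $f_1,\dots,f_\kappa\in\mathcal F$ with $\mathrm{e2e}^T_{f_j}\equiv h_*$, and a conditional distribution $\mathcal P(\cdot\mid x)$ on $[\kappa]$; $x^{(i)}$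 are i.i.d. from $\mathcal D$, $j^{(i)}\sim\mathcal P(\cdot\mid x^{(i)})$ independently, and the learner sees $(x^{(i)},z^{(i)})$ with $z^{(i)}=\mathrm{CoT}^T_{f_{j^{(i)}}}(x^{(i)})$. Learning with sample complexity $m(\epsilon,\delta)$: for every $\epsilon,\delta$ and every adversary choice, given $m\ge m(\epsilon,\delta)$ samples, with probability $\ge1-\delta$ the output $\hat h$ has $\Pr_{x\sim\mathcal D}[\hat h(x)\ne h_*(x)]\le\epsilon$. Rule $\kappa$-$\mathrm{Cons}_{\mathrm{CoT}}$: find $\hat f_1,\dots,\hat f_\kappa\in\mathcal F$ with $\mathrm{e2e}^T_{\hat f_1}\equiv\dots\equiv\mathrm{e2e}^T_{\hat f_\kappa}$ such that for every $i$ there is $j$ with $z^{(i)}=\mathrm{CoT}^T_{\hat f_j}(x^{(i)})$, and return $\mathrm{e2e}^T_{\hat f_j}$ for some $j$. Loss class: $\mathcal L^T_{\mathrm{CoT}}(\mathcal F;\kappa)=\{\ell_{f_1,\dots,f_\kappa}:f_1,\dots,f_\kappa\in\mathcal F,\ \mathrm{e2e}^T_{f_1}\equiv\dots\equiv\mathrm{e2e}^T_{f_\kappa}\}$, where $\ell_{f_1,\dots,f_\kappa}(x,z)=\mathbb 1\{\forall i\in[\kappa]:\mathrm{CoT}^T_{f_i}(x)\ne z\}$, a binary class on $\mathcal X\times\{0,1\}^T$. $\mathrm{VCdim}(\mathcal F)$ is the VC dimension of $\mathcal F$ as a class of functions on $\{0,1\}^*$. *)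

theory Defs
  imports "HOL-Probability.Probability"
begin

definition gen_step :: "(bool list \<Rightarrow> bool) \<Rightarrow> bool list \<Rightarrow> bool list" where
  "gen_step f x = x @ [f x]"

definition e2e :: "nat \<Rightarrow> (bool list \<Rightarrow> bool) \<Rightarrow> bool list \<Rightarrow> bool" where
  "e2e T f x = last ((gen_step f ^^ T) x)"

definition CoT :: "nat \<Rightarrow> (bool list \<Rightarrow> bool) \<Rightarrow> bool list \<Rightarrow> bool list" where
  "CoT T f x = map (\<lambda>t. e2e t f x) [1..<T+1]"

definition shatters :: "('a \<Rightarrow> bool) set \<Rightarrow> 'a set \<Rightarrow> bool" where
  "shatters H S \<longleftrightarrow> (\<forall>B \<subseteq> S. \<exists>h\<in>H. \<forall>x\<in>S. h x \<longleftrightarrow> x \<in> B)"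

definition VC_dim :: "('a \<Rightarrow> bool) set \<Rightarrow> 'a set \<Rightarrow> enat" where
  "VC_dim H A = Sup {enat (card S) | S. S \<subseteq> A \<and> finite S \<and> shatters H S}"

text \<open>Loss class L^T_CoT(F; kappa); thinkers are indexed by 0..kappa-1.
  The loss value True means loss 1.\<close>
definition loss_class :: "nat \<Rightarrow> (bool list \<Rightarrow> bool) set \<Rightarrow> nat \<Rightarrow> (bool list \<times> bool list \<Rightarrow> bool) set" where
  "loss_class T F \<kappa> =
     {(\<lambda>(x, z). \<forall>i<\<kappa>. CoT T (g i) x \<noteq> z) | g.
        (\<forall>i<\<kappa>. g i \<in> F) \<and> (\<forall>i<\<kappa>. \<forall>j<\<kappa>. e2e T (g i) = e2e T (g j))}"

definition cons_output :: "nat \<Rightarrow> (bool list \<Rightarrow> bool) set \<Rightarrow> nat \<Rightarrow> (bool list \<times> bool list) list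
     \<Rightarrow> (bool list \<Rightarrow> bool) \<Rightarrow> bool" where
  "cons_output T F \<kappa> S h \<longleftrightarrow>
     (\<exists>g. (\<forall>i<\<kappa>. g i \<in> F) \<and> (\<forall>i<\<kappa>. \<forall>j<\<kappa>. e2e T (g i) = e2e T (g j))
        \<and> (\<forall>p\<in>set S. \<exists>j<\<kappa>. snd p = CoT T (g j) (fst p))
        \<and> (\<exists>j<\<kappa>. h = e2e T (g j)))"

definition ids_example :: "nat \<Rightarrow> bool list pmf \<Rightarrow> (nat \<Rightarrow> bool list \<Rightarrow> bool) \<Rightarrow> (bool list \<Rightarrow> nat pmf)
     \<Rightarrow> (bool list \<times> bool list) pmf" where
  "ids_example T D fs P =
     bind_pmf D (\<lambda>x. bind_pmf (P x) (\<lambda>j. return_pmf (x, CoT T (fs j) x)))"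

fun iid_pmf :: "nat \<Rightarrow> 'a pmf \<Rightarrow> 'a list pmf" where
  "iid_pmf 0 p = return_pmf []"
| "iid_pmf (Suc n) p = bind_pmf p (\<lambda>a. map_pmf (\<lambda>xs. a # xs) (iid_pmf n p))"

end

theory Submission
  imports Defs
begin


lemma iid_pmf_map: "map_pmf (map f) (iid_pmf m p) = iid_pmf m (map_pmf f p)"
proof (induction m)
  case (Suc m)
  have "map_pmf (map f) (iid_pmf (Suc m) p) = bind_pmf p (\<lambda>a. map_pmf ((#) (f a)) (map_pmf (map f) (iid_pmf m p)))"
    by (simp add: map_bind_pmf map_pmf_comp)
  thus ?case using Suc by (simp add: bind_map_pmf)
qed simp

lemma set_iid_pmf: "xs \<in> set_pmf (iid_pmf m p) \<Longrightarrow> length xs = m \<and> set xs \<subseteq> set_pmf p"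
  by (induction m arbitrary: xs) fastforce+

lemma iid_pmf_pair:
  "map_pmf (\<lambda>l. (map fst l, map snd l)) (iid_pmf m (pair_pmf A B)) = pair_pmf (iid_pmf m A) (iid_pmf m B)"
proof (induction m)
  case 0 thus ?case by (simp add: pair_return_pmf1)
next
  case (Suc m)
  have "map_pmf (\<lambda>l. (map fst l, map snd l)) (iid_pmf (Suc m) (pair_pmf A B))
     = bind_pmf (pair_pmf A B) (\<lambda>ab. map_pmf (\<lambda>(u,v). (fst ab # u, snd ab # v))
          (map_pmf (\<lambda>l. (map fst l, map snd l)) (iid_pmf m (pair_pmf A B))))"
    by (simp add: map_bind_pmf map_pmf_comp)
  also have "\<dots> = bind_pmf (pair_pmf A B) (\<lambda>ab. map_pmf (\<lambda>(u,v). (fst ab # u, snd ab # v))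
          (pair_pmf (iid_pmf m A) (iid_pmf m B)))" using Suc by simp
  also have "\<dots> = pair_pmf (iid_pmf (Suc m) A) (iid_pmf (Suc m) B)"
    unfolding pair_pmf_def
    apply (simp add: map_bind_pmf bind_map_pmf bind_assoc_pmf bind_return_pmf map_pmf_def)
    apply (rule bind_pmf_cong[OF refl])
    apply (rule bind_commute_pmf)
    done
  finally show ?case .
qed



lemma measure_bind_pmf':
  "measure_pmf.prob (bind_pmf A f) E = (\<integral>x. measure_pmf.prob (f x) E \<partial>measure_pmf A)"
proof -
  have "emeasure (measure_pmf (bind_pmf A f)) E = (\<integral>\<^sup>+x. emeasure (measure_pmf (f x)) E \<partial>measure_pmf A)"
    by (rule emeasure_bind_pmf)
  also have "\<dots> = (\<integral>\<^sup>+x. ennreal (measure_pmf.prob (f x) E) \<partial>measure_pmf A)"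
    by (simp add: measure_pmf.emeasure_eq_measure)
  also have "\<dots> = ennreal (\<integral>x. measure_pmf.prob (f x) E \<partial>measure_pmf A)"
    by (intro nn_integral_eq_integral measure_pmf.integrable_const_bound[where B=1]) auto
  finally show ?thesis
    by (simp add: measure_pmf.emeasure_eq_measure integral_nonneg)
qed

lemma measure_pair_pmf':
  "measure_pmf.prob (pair_pmf A B) E = (\<integral>a. measure_pmf.prob B {b. (a,b) \<in> E} \<partial>measure_pmf A)"
proof -
  have "pair_pmf A B = bind_pmf A (\<lambda>a. map_pmf (Pair a) B)"
    by (simp add: pair_pmf_def map_pmf_def)
  thus ?thesis by (simp add: measure_bind_pmf' vimage_def)
qed

abbreviation coin :: "bool pmf" where "coin \<equiv> bernoulli_pmf (1/2)"

lemma coin_fix: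
  "I \<subseteq> {..<m} \<Longrightarrow> measure_pmf.prob (iid_pmf m coin) {\<sigma>. \<forall>i\<in>I. \<sigma>!i = b i} = (1/2)^card I"
proof (induction m arbitrary: I b)
  case 0
  thus ?case by simp
next
  case (Suc n)
  define I' where "I' = {i. Suc i \<in> I}"
  have I'sub: "I' \<subseteq> {..<n}" using Suc.prems by (auto simp: I'_def)
  have IH: "measure_pmf.prob (iid_pmf n coin) {xs. \<forall>i\<in>I'. xs!i = b (Suc i)} = (1/2)^card I'"
    using Suc.IH[OF I'sub] .
  have fin: "finite I'" using I'sub finite_subset by blast
  have ev: "\<And>a. Cons a -` {\<sigma>. \<forall>i\<in>I. \<sigma>!i = b i} =
      (if 0 \<in> I \<and> a \<noteq> b 0 then {} else {xs. \<forall>i\<in>I'. xs!i = b (Suc i)})"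
  proof -
    fix a
    show "Cons a -` {\<sigma>. \<forall>i\<in>I. \<sigma>!i = b i} =
      (if 0 \<in> I \<and> a \<noteq> b 0 then {} else {xs. \<forall>i\<in>I'. xs!i = b (Suc i)})"
    proof (intro set_eqI iffI)
      fix xs assume "xs \<in> Cons a -` {\<sigma>. \<forall>i\<in>I. \<sigma>!i = b i}"
      hence H: "\<forall>i\<in>I. (a # xs)!i = b i" by simp
      have "\<not> (0 \<in> I \<and> a \<noteq> b 0)"
      proof
        assume "0 \<in> I \<and> a \<noteq> b 0"
        moreover from this H have "(a # xs)!0 = b 0" by blast
        ultimately show False by simp
      qed
      moreover have "\<forall>i\<in>I'. xs!i = b (Suc i)"
      proof
        fix i assume "i \<in> I'"
        hence "Suc i \<in> I" by (simp add: I'_def)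
        with H have "(a # xs)!(Suc i) = b (Suc i)" by blast
        thus "xs!i = b (Suc i)" by simp
      qed
      ultimately show "xs \<in> (if 0 \<in> I \<and> a \<noteq> b 0 then {} else {xs. \<forall>i\<in>I'. xs!i = b (Suc i)})" by simp
    next
      fix xs assume "xs \<in> (if 0 \<in> I \<and> a \<noteq> b 0 then {} else {xs. \<forall>i\<in>I'. xs!i = b (Suc i)})"
      hence H1: "\<not> (0 \<in> I \<and> a \<noteq> b 0)" and H2: "\<forall>i\<in>I'. xs!i = b (Suc i)"
        by (auto split: if_splits)
      have "(a # xs)!i = b i" if "i \<in> I" for i
      proof (cases i)
        case 0 thus ?thesis using H1 that by auto
      next
        case (Suc j) thus ?thesis using H2 that by (auto simp: I'_def)
      qed
      thus "xs \<in> Cons a -` {\<sigma>. \<forall>i\<in>I. \<sigma>!i = b i}" by simp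
    qed
  qed
  have cardI: "card I = card I' + (if 0 \<in> I then 1 else 0)"
  proof -
    have "I = Suc ` I' \<union> (I \<inter> {0})" by (auto simp: I'_def) (metis not0_implies_Suc imageI mem_Collect_eq)
    moreover have "card (Suc ` I' \<union> (I \<inter> {0})) = card (Suc ` I') + card (I \<inter> {0})"
      by (rule card_Un_disjoint) (use fin in auto)
    moreover have "card (Suc ` I') = card I'" by (simp add: card_image)
    ultimately show ?thesis by (auto simp: Int_absorb2)
  qed
  have "measure_pmf.prob (iid_pmf (Suc n) coin) {\<sigma>. \<forall>i\<in>I. \<sigma>!i = b i}
     = (\<integral>a. (if 0 \<in> I \<and> a \<noteq> b 0 then 0 else (1/2)^card I') \<partial>measure_pmf coin)"
    unfolding iid_pmf.simps measure_bind_pmf' measure_map_pmf ev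
    by (intro Bochner_Integration.integral_cong refl) (simp add: IH)
  also have "\<dots> = (1/2)^card I"
    by (cases "b 0") (auto simp: cardI)
  finally show ?case .
qed


definition cnt :: "('a \<Rightarrow> bool) \<Rightarrow> 'a list \<Rightarrow> nat" where
  "cnt h xs = length (filter h xs)"

lemma nn_exp_cnt:
  "(\<integral>\<^sup>+xs. ennreal (exp (- real (cnt h xs))) \<partial>measure_pmf (iid_pmf m p))
     = ennreal ((1 - measure_pmf.prob p {x. h x} + measure_pmf.prob p {x. h x} * exp (-1)) ^ m)"
proof (induction m)
  case 0
  thus ?case by (simp add: cnt_def)
next
  case (Suc m)
  define q where "q = measure_pmf.prob p {x. h x}"
  define e where "e = (\<lambda>a. exp (- (if h a then 1 else 0::real)))"
  have q01: "0 \<le> q" "q \<le> 1" by (auto simp: q_def)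
  have split: "\<And>a xs. ennreal (exp (- real (cnt h (a # xs)))) = ennreal (e a) * ennreal (exp (- real (cnt h xs)))"
    by (simp add: cnt_def e_def ennreal_mult[symmetric] exp_add[symmetric] algebra_simps)
  have "(\<integral>\<^sup>+xs. ennreal (exp (- real (cnt h xs))) \<partial>measure_pmf (iid_pmf (Suc m) p))
      = (\<integral>\<^sup>+a. ennreal (e a) * (\<integral>\<^sup>+xs. ennreal (exp (- real (cnt h xs))) \<partial>measure_pmf (iid_pmf m p)) \<partial>measure_pmf p)"
    by (simp add: split nn_integral_cmult)
  also have "\<dots> = (\<integral>\<^sup>+a. ennreal (e a) \<partial>measure_pmf p) * ennreal ((1 - q + q * exp (-1)) ^ m)"
    using Suc by (simp add: q_def nn_integral_multc)
  also have "(\<integral>\<^sup>+a. ennreal (e a) \<partial>measure_pmf p) = ennreal (1 - q + q * exp (-1))"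
  proof -
    have eq: "e = (\<lambda>a. 1 - (1 - exp (-1)) * indicator {x. h x} a)"
      by (auto simp: e_def fun_eq_iff indicator_def)
    have "(\<integral>\<^sup>+a. ennreal (e a) \<partial>measure_pmf p) = ennreal (\<integral>a. e a \<partial>measure_pmf p)"
      by (intro nn_integral_eq_integral measure_pmf.integrable_const_bound[where B=1]) (auto simp: e_def)
    also have "(\<integral>a. e a \<partial>measure_pmf p) = 1 - (1 - exp (-1)) * q"
      unfolding eq
      by (subst Bochner_Integration.integral_diff) (auto simp: q_def intro!: measure_pmf.integrable_const_bound[where B=1])
    finally show ?thesis by (simp add: algebra_simps)
  qed
  also have "ennreal (1 - q + q * exp (-1)) * ennreal ((1 - q + q * exp (-1)) ^ m) = ennreal ((1 - q + q * exp (-1)) ^ Suc m)"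
    using q01 by (subst ennreal_mult[symmetric]) (auto intro!: add_nonneg_nonneg)
  finally show ?case by (simp add: q_def)
qed

lemma chernoff_cnt:
  assumes q: "measure_pmf.prob p {x. h x} > \<epsilon>" and e: "\<epsilon> > 0" and m: "4 \<le> \<epsilon> * m"
  shows "measure_pmf.prob (iid_pmf m p) {xs. real (cnt h xs) \<le> \<epsilon> * m / 4} \<le> 1/2"
proof -
  define q where "q = measure_pmf.prob p {x. h x}"
  have q01: "0 \<le> q" "q \<le> 1" by (auto simp: q_def)
  have "emeasure (measure_pmf (iid_pmf m p)) {xs \<in> UNIV. real (cnt h xs) \<le> \<epsilon> * m / 4}
     \<le> ennreal (exp (1 * (\<epsilon> * m / 4))) * (\<integral>\<^sup>+xs. ennreal (exp (- 1 * real (cnt h xs))) * indicator UNIV xs \<partial>measure_pmf (iid_pmf m p))"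
    by (rule Chernoff_ineq_nn_integral_le) auto
  also have "\<dots> = ennreal (exp (\<epsilon> * m / 4) * (1 - q + q * exp (-1)) ^ m)"
    using nn_exp_cnt[where h=h and m=m and p=p] q01
    by (simp add: q_def ennreal_mult[symmetric] add_nonneg_nonneg)
  finally have A: "measure_pmf.prob (iid_pmf m p) {xs. real (cnt h xs) \<le> \<epsilon> * m / 4} \<le> exp (\<epsilon> * m / 4) * (1 - q + q * exp (-1)) ^ m"
    using q01 by (simp add: measure_pmf.emeasure_eq_measure ennreal_le_iff add_nonneg_nonneg)
  have e1: "exp (-1::real) \<le> 1/2"
  proof -
    have "2 \<le> exp (1::real)" using exp_ge_add_one_self[of 1] by simp
    thus ?thesis by (simp add: exp_minus field_simps)
  qed
  have b0: "0 \<le> 1 - q + q * exp (-1)" using q01 by (simp add: add_nonneg_nonneg)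
  have "q * exp (-1) \<le> q * (1/2)" by (rule mult_left_mono[OF e1 q01(1)])
  hence "1 - q + q * exp (-1) \<le> 1 - q / 2" by simp
  also have "\<dots> \<le> exp (- q / 2)" using exp_ge_add_one_self[of "-q/2"] by simp
  finally have "(1 - q + q * exp (-1)) ^ m \<le> exp (- q / 2) ^ m" using b0 by (rule power_mono)
  also have "\<dots> = exp (- q * m / 2)" by (simp add: exp_of_nat_mult[symmetric] algebra_simps)
  also have "\<dots> \<le> exp (- \<epsilon> * m / 2)" using q by (auto simp: q_def intro!: mult_right_mono divide_right_mono)
  finally have "exp (\<epsilon> * m / 4) * (1 - q + q * exp (-1)) ^ m \<le> exp (\<epsilon> * m / 4) * exp (- \<epsilon> * m / 2)"
    by simp
  also have "\<dots> = exp (- (\<epsilon> * m / 4))" by (simp add: exp_add[symmetric])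
  also have "\<dots> \<le> exp (-1)" using m by simp
  also have "\<dots> \<le> 1/2" by (rule e1)
  finally show ?thesis using A by linarith
qed



definition shat_sets :: "'a set set \<Rightarrow> 'a set \<Rightarrow> bool" where
  "shat_sets R S \<longleftrightarrow> (\<forall>B\<subseteq>S. \<exists>A\<in>R. A \<inter> S = B)"

lemma pajor:
  assumes "finite Q"
  shows "R \<subseteq> Pow Q \<Longrightarrow> card R \<le> card {S. S \<subseteq> Q \<and> shat_sets R S}"
  using assms
proof (induction Q arbitrary: R rule: finite_induct)
  case empty
  hence "R = {} \<or> R = {{}}" by auto
  thus ?case
  proof
    assume "R = {{}}"
    hence "{S. S \<subseteq> {} \<and> shat_sets R S} = {{}}" by (auto simp: shat_sets_def)
    thus ?thesis using \<open>R = {{}}\<close> by simp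
  qed simp
next
  case (insert x Q R)
  define R0 where "R0 = {A\<in>R. x \<notin> A}"
  define R1' where "R1' = {A\<in>R. x \<in> A}"
  define R1 where "R1 = (\<lambda>A. A - {x}) ` R1'"
  have finR: "finite R"
    by (rule finite_subset[OF insert.prems]) (simp add: insert.hyps(1))
  have R0sub: "R0 \<subseteq> Pow Q" using insert.prems by (auto simp: R0_def)
  have R1sub: "R1 \<subseteq> Pow Q" using insert.prems by (auto simp: R1_def R1'_def)
  have finQ: "finite (Pow Q)" using insert.hyps(1) by simp
  have fin0: "finite R0" by (rule finite_subset[OF R0sub finQ])
  have fin1: "finite R1" by (rule finite_subset[OF R1sub finQ])
  have "card R = card R0 + card R1'"
  proof -
    have "R = R0 \<union> R1'" by (auto simp: R0_def R1'_def)
    moreover have "card (R0 \<union> R1') = card R0 + card R1'"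
      by (rule card_Un_disjoint) (use finR in \<open>auto simp: R0_def R1'_def\<close>)
    ultimately show ?thesis by simp
  qed
  moreover have "card R1 = card R1'"
    unfolding R1_def
  proof (rule card_image, rule inj_onI)
    fix A B assume "A \<in> R1'" "B \<in> R1'" "A - {x} = B - {x}"
    hence "insert x (A - {x}) = insert x (B - {x})" "x \<in> A" "x \<in> B" by (auto simp: R1'_def)
    thus "A = B" by (simp add: insert_absorb)
  qed
  moreover have "card R0 + card R1 = card (R0 \<union> R1) + card (R0 \<inter> R1)"
    by (rule card_Un_Int[OF fin0 fin1])
  moreover have "card (R0 \<union> R1) \<le> card {S. S \<subseteq> Q \<and> shat_sets (R0 \<union> R1) S}"
    by (rule insert.IH) (use R0sub R1sub in blast)
  moreover have "card (R0 \<inter> R1) \<le> card {S. S \<subseteq> Q \<and> shat_sets (R0 \<inter> R1) S}"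
    by (rule insert.IH) (use R0sub in blast)
  moreover
  define Sa where "Sa = {S. S \<subseteq> Q \<and> shat_sets (R0 \<union> R1) S}"
  define Sb where "Sb = {S. S \<subseteq> Q \<and> shat_sets (R0 \<inter> R1) S}"
  have "card Sa + card Sb \<le> card {S. S \<subseteq> insert x Q \<and> shat_sets R S}"
  proof -
    have finSa: "finite Sa" by (rule finite_subset[OF _ finQ]) (auto simp: Sa_def)
    have finSb: "finite Sb" by (rule finite_subset[OF _ finQ]) (auto simp: Sb_def)
    have cb: "card (insert x ` Sb) = card Sb"
    proof (rule card_image, rule inj_onI)
      fix A B assume "A \<in> Sb" "B \<in> Sb" "insert x A = insert x B"
      moreover have "x \<notin> A" "x \<notin> B" using \<open>A \<in> Sb\<close> \<open>B \<in> Sb\<close> insert.hyps(2) by (auto simp: Sb_def)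
      ultimately show "A = B" by (metis Diff_insert_absorb)
    qed
    have disj: "Sa \<inter> insert x ` Sb = {}" using insert.hyps(2) by (auto simp: Sa_def)
    have "card (Sa \<union> insert x ` Sb) = card Sa + card Sb"
      using card_Un_disjoint[OF finSa finite_imageI[OF finSb] disj] cb by simp
    moreover have sub: "Sa \<union> insert x ` Sb \<subseteq> {S. S \<subseteq> insert x Q \<and> shat_sets R S}"
    proof
      fix S assume "S \<in> Sa \<union> insert x ` Sb"
      thus "S \<in> {S. S \<subseteq> insert x Q \<and> shat_sets R S}"
      proof
        assume S: "S \<in> Sa"
        hence SQ: "S \<subseteq> Q" and sh: "shat_sets (R0 \<union> R1) S" by (auto simp: Sa_def)
        have xS: "x \<notin> S" using SQ insert.hyps(2) by blast
        have "shat_sets R S" unfolding shat_sets_def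
        proof (intro allI impI)
          fix B assume "B \<subseteq> S"
          hence "\<exists>A\<in>R0 \<union> R1. A \<inter> S = B" using sh unfolding shat_sets_def by blast
          then obtain A where A: "A \<in> R0 \<union> R1" "A \<inter> S = B" by blast
          show "\<exists>A\<in>R. A \<inter> S = B"
          proof (cases "A \<in> R0")
            case True
            hence "A \<in> R" unfolding R0_def by blast
            thus ?thesis using A(2) by blast
          next
            case False
            hence "A \<in> R1" using A(1) by blast
            then obtain A' where A': "A' \<in> R1'" "A = A' - {x}" unfolding R1_def by blast
            have "A' \<in> R" using A'(1) unfolding R1'_def by blast
            moreover have "A' \<inter> S = B" using A(2) A'(2) xS by blast
            ultimately show ?thesis by blast
          qed
        qed
        thus ?thesis using SQ by auto
      next
        assume "S \<in> insert x ` Sb"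
        then obtain S0 where S: "S = insert x S0" "S0 \<subseteq> Q" and sh: "shat_sets (R0 \<inter> R1) S0"
          by (auto simp: Sb_def)
        have xS: "x \<notin> S0" using S insert.hyps(2) by blast
        have "shat_sets R S" unfolding shat_sets_def
        proof (intro allI impI)
          fix B assume B: "B \<subseteq> S"
          have "B - {x} \<subseteq> S0" using B S by auto
          hence "\<exists>A\<in>R0 \<inter> R1. A \<inter> S0 = B - {x}" using sh unfolding shat_sets_def by blast
          then obtain A where A: "A \<in> R0" "A \<in> R1" "A \<inter> S0 = B - {x}" by blast
          show "\<exists>A\<in>R. A \<inter> S = B"
          proof (cases "x \<in> B")
            case True
            obtain A'' where A'': "A'' \<in> R1'" "A = A'' - {x}" using A(2) unfolding R1_def by blast
            have A': "A'' \<in> R" "x \<in> A''" using A''(1) unfolding R1'_def by blast+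
            have "A'' \<inter> S0 = B - {x}" using A(3) A''(2) xS by blast
            hence "A'' \<inter> S = insert x (B - {x})" using S(1) A'(2) by blast
            also have "\<dots> = B" using True by blast
            finally have "A'' \<inter> S = B" .
            thus ?thesis using A' by blast
          next
            case False
            have "A \<in> R" "x \<notin> A" using A(1) unfolding R0_def by blast+
            moreover have "A \<inter> S = B" using A False S \<open>x \<notin> A\<close> by blast
            ultimately show ?thesis by blast
          qed
        qed
        thus ?thesis using S by auto
      qed
    qed
    have "finite {S. S \<subseteq> insert x Q \<and> shat_sets R S}"
      by (rule finite_subset[of _ "Pow (insert x Q)"]) (blast, simp add: insert.hyps(1))
    hence "card (Sa \<union> insert x ` Sb) \<le> card {S. S \<subseteq> insert x Q \<and> shat_sets R S}"
      using sub card_mono by blast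
    ultimately show ?thesis by simp
  qed
  ultimately show ?case unfolding Sa_def Sb_def by linarith
qed


lemma card_small_subsets:
  assumes "finite Q"
  shows "card {S. S \<subseteq> Q \<and> card S \<le> d} = (\<Sum>i\<le>d. card Q choose i)"
proof -
  have "{S. S \<subseteq> Q \<and> card S \<le> d} = (\<Union>i\<in>{..d}. {S. S \<subseteq> Q \<and> card S = i})" by auto
  moreover have "card (\<Union>i\<in>{..d}. {S. S \<subseteq> Q \<and> card S = i}) = (\<Sum>i\<le>d. card {S. S \<subseteq> Q \<and> card S = i})"
    by (rule card_UN_disjoint) (use assms in auto)
  ultimately show ?thesis using n_subsets[OF assms] by simp
qed

lemma binom_sum_bound:
  fixes t :: real
  assumes t: "0 < t" "t \<le> 1"
  shows "real (\<Sum>i\<le>d. N choose i) \<le> (1/t)^d * exp (t * N)"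
proof -
  have "real (\<Sum>i\<le>d. N choose i) \<le> (\<Sum>i\<le>d. real (N choose i) * (t^i / t^d))"
  proof -
    have "real (N choose i) \<le> real (N choose i) * (t^i / t^d)" if "i \<le> d" for i
    proof -
      have "t^d \<le> t^i" using t that by (intro power_decreasing) auto
      hence "1 \<le> t^i / t^d" using t by simp
      hence "real (N choose i) * 1 \<le> real (N choose i) * (t^i / t^d)" by (intro mult_left_mono) auto
      thus ?thesis by simp
    qed
    hence "(\<Sum>i\<le>d. real (N choose i)) \<le> (\<Sum>i\<le>d. real (N choose i) * (t^i / t^d))"
      by (intro sum_mono) blast
    thus ?thesis by simp
  qed
  also have "\<dots> = (1/t)^d * (\<Sum>i\<le>d. real (N choose i) * t^i)"
    by (simp add: sum_distrib_left field_simps)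
  also have "(\<Sum>i\<le>d. real (N choose i) * t^i) \<le> (\<Sum>i\<le>max d N. real (N choose i) * t^i)"
    using t by (intro sum_mono2) auto
  also have "\<dots> = (\<Sum>i\<le>N. real (N choose i) * t^i)"
    by (rule sum.mono_neutral_right) (auto simp: binomial_eq_0_iff)
  also have "\<dots> = (1 + t)^N"
    using binomial_ring[of t 1 N] by (simp add: ac_simps)
  also have "\<dots> \<le> exp t ^ N"
    using t by (intro power_mono) (auto simp: exp_ge_add_one_self add.commute)
  also have "\<dots> = exp (t * N)" by (simp add: exp_of_nat_mult[symmetric] mult.commute)
  finally show ?thesis using t by (simp add: mult_left_mono)
qed

lemma sauer_class:
  fixes t :: real
  assumes "finite Q" "Q \<subseteq> Y"
    and VC: "\<And>S. S \<subseteq> Y \<Longrightarrow> finite S \<Longrightarrow> shatters H S \<Longrightarrow> card S \<le> d"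
    and t: "0 < t" "t \<le> 1"
  shows "real (card ((\<lambda>h. {x\<in>Q. h x}) ` H)) \<le> (1/t)^d * exp (t * card Q)"
proof -
  define R where "R = (\<lambda>h. {x\<in>Q. h x}) ` H"
  have "card R \<le> card {S. S \<subseteq> Q \<and> shat_sets R S}"
    by (rule pajor[OF assms(1)]) (unfold R_def, blast)
  also have "\<dots> \<le> card {S. S \<subseteq> Q \<and> card S \<le> d}"
  proof (rule card_mono)
    show "finite {S. S \<subseteq> Q \<and> card S \<le> d}"
      by (rule finite_subset[of _ "Pow Q"]) (blast, simp add: assms(1))
    show "{S. S \<subseteq> Q \<and> shat_sets R S} \<subseteq> {S. S \<subseteq> Q \<and> card S \<le> d}"
    proof
      fix S assume "S \<in> {S. S \<subseteq> Q \<and> shat_sets R S}"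
      hence S: "S \<subseteq> Q" "shat_sets R S" by simp_all
      have "shatters H S" unfolding shatters_def
      proof (intro allI impI)
        fix B assume "B \<subseteq> S"
        have "\<exists>A\<in>R. A \<inter> S = B" using S(2) \<open>B \<subseteq> S\<close> unfolding shat_sets_def by blast
        then obtain A where "A \<in> R" "A \<inter> S = B" by blast
        then obtain h where "h \<in> H" "A = {x\<in>Q. h x}" unfolding R_def by blast
        thus "\<exists>h\<in>H. \<forall>x\<in>S. h x = (x \<in> B)" using \<open>A \<inter> S = B\<close> S by (intro bexI[of _ h]) auto
      qed
      moreover have "finite S" using S(1) assms(1) by (rule finite_subset)
      moreover have "S \<subseteq> Y" using S(1) assms(2) by (rule subset_trans)
      ultimately have "card S \<le> d" using VC by blast
      thus "S \<in> {S. S \<subseteq> Q \<and> card S \<le> d}" using S by simp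
    qed
  qed
  also have "\<dots> = (\<Sum>i\<le>d. card Q choose i)" by (rule card_small_subsets[OF assms(1)])
  finally have "real (card R) \<le> real (\<Sum>i\<le>d. card Q choose i)" by linarith
  also have "\<dots> \<le> (1/t)^d * exp (t * card Q)" by (rule binom_sum_bound[OF t])
  finally show ?thesis by (simp add: R_def)
qed



definition swp :: "('a \<times> 'a) \<times> bool \<Rightarrow> 'a \<times> 'a" where
  "swp = (\<lambda>((x,y),b). if b then (y,x) else (x,y))"

lemma half_pow_le: "(1/2::real)^k \<le> exp (- real k / 2)"
proof -
  have "1/2 \<le> exp (-1/2::real)"
    using exp_half_le2 by (simp add: exp_minus field_simps)
  hence "(1/2::real)^k \<le> exp (-1/2) ^ k" by (intro power_mono) auto
  also have "\<dots> = exp (- real k / 2)" by (simp add: exp_of_nat_mult[symmetric])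
  finally show ?thesis .
qed

lemma swap_inner:
  fixes W :: "('a \<times> 'a) list" and t r :: real
  assumes len: "length W = m" and WY: "\<And>x y. (x,y) \<in> set W \<Longrightarrow> x \<in> Y \<and> y \<in> Y"
    and VC: "\<And>S. S \<subseteq> Y \<Longrightarrow> finite S \<Longrightarrow> shatters H S \<Longrightarrow> card S \<le> d"
    and t: "0 < t" "t \<le> 1"
  shows "measure_pmf.prob (iid_pmf m coin)
     {\<sigma>. \<exists>h\<in>H. (\<forall>x\<in>set (map fst (map swp (zip W \<sigma>))). \<not> h x) \<and> r < real (cnt h (map snd (map swp (zip W \<sigma>))))}
     \<le> (1/t)^d * exp (t * (2 * m)) * exp (- r / 2)"
proof -
  define Q where "Q = fst ` set W \<union> snd ` set W"
  have finQ: "finite Q" by (simp add: Q_def)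
  have QY: "Q \<subseteq> Y" using WY by (force simp: Q_def)
  have cardQ: "card Q \<le> 2 * m"
  proof -
    have "card Q \<le> card (fst ` set W) + card (snd ` set W)" unfolding Q_def by (rule card_Un_le)
    also have "card (fst ` set W) \<le> m" using card_image_le[of "set W" fst] card_length[of W] len by simp
    also have "card (snd ` set W) \<le> m" using card_image_le[of "set W" snd] card_length[of W] len by simp
    finally show ?thesis by simp
  qed
  define R where "R = (\<lambda>h. {x\<in>Q. h x}) ` H"
  have finR: "finite R" unfolding R_def
    by (rule finite_subset[of _ "Pow Q"]) (blast, simp add: finQ)
  have cardR: "real (card R) \<le> (1/t)^d * exp (t * card Q)"
    unfolding R_def by (rule sauer_class[OF finQ QY VC t]) blast+
  define sw where "sw = (\<lambda>\<sigma> i. swp (W!i, \<sigma>!i))"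
  define E where "E = (\<lambda>A. {\<sigma>. (\<forall>i<m. fst (sw \<sigma> i) \<notin> A) \<and> r < real (card {i. i < m \<and> snd (sw \<sigma> i) \<in> A})})"
  have swQ: "fst (sw \<sigma> i) \<in> Q \<and> snd (sw \<sigma> i) \<in> Q" if "i < m" for \<sigma> i
  proof -
    have "W!i \<in> set W" using that len by simp
    hence "fst (W!i) \<in> Q" "snd (W!i) \<in> Q" unfolding Q_def by blast+
    thus ?thesis by (auto simp: sw_def swp_def split: prod.splits)
  qed
  define Ev where "Ev = {\<sigma>. \<exists>h\<in>H. (\<forall>x\<in>set (map fst (map swp (zip W \<sigma>))). \<not> h x) \<and> r < real (cnt h (map snd (map swp (zip W \<sigma>))))}"
  have sub1: "Ev \<inter> set_pmf (iid_pmf m coin) \<subseteq> (\<Union>A\<in>R. E A)"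
  proof
    fix \<sigma> assume "\<sigma> \<in> Ev \<inter> set_pmf (iid_pmf m coin)"
    then obtain h where h: "h \<in> H" "\<forall>x\<in>set (map fst (map swp (zip W \<sigma>))). \<not> h x"
        "r < real (cnt h (map snd (map swp (zip W \<sigma>))))" and ls: "length \<sigma> = m"
      unfolding Ev_def using set_iid_pmf by blast
    define L where "L = map swp (zip W \<sigma>)"
    have lenL: "length L = m" using ls len by (simp add: L_def)
    have Li: "L!i = sw \<sigma> i" if "i < m" for i using that ls len by (simp add: L_def sw_def)
    define A where "A = {x\<in>Q. h x}"
    have "A \<in> R" unfolding A_def R_def using h(1) by blast
    moreover have "\<forall>i<m. fst (sw \<sigma> i) \<notin> A"
    proof (intro allI impI)
      fix i assume i: "i < m"
      have "fst (L!i) \<in> set (map fst L)" using i lenL by simp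
      thus "fst (sw \<sigma> i) \<notin> A" using h(2) Li[OF i] unfolding L_def A_def by auto
    qed
    moreover have "cnt h (map snd L) = card {i. i < m \<and> snd (sw \<sigma> i) \<in> A}"
    proof -
      have "cnt h (map snd L) = card {i. i < length (map snd L) \<and> h (map snd L ! i)}"
        unfolding cnt_def by (rule length_filter_conv_card)
      also have "{i. i < length (map snd L) \<and> h (map snd L ! i)} = {i. i < m \<and> snd (sw \<sigma> i) \<in> A}"
        using lenL Li swQ unfolding A_def by auto
      finally show ?thesis .
    qed
    ultimately have "\<sigma> \<in> E A" using h(3) unfolding E_def L_def by simp
    thus "\<sigma> \<in> (\<Union>A\<in>R. E A)" using \<open>A \<in> R\<close> by blast
  qed
  have EA: "measure_pmf.prob (iid_pmf m coin) (E A) \<le> exp (- r / 2)" for A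
  proof (cases "E A = {}")
    case True thus ?thesis by simp
  next
    case False
    then obtain \<sigma>0 where s0: "\<sigma>0 \<in> E A" by blast
    define I where "I = {i. i < m \<and> (fst (W!i) \<in> A \<or> snd (W!i) \<in> A)}"
    have Isub: "I \<subseteq> {..<m}" by (auto simp: I_def)
    have finI: "finite I" using Isub finite_subset by blast
    have swc: "sw \<sigma> i = (if \<sigma>!i then (snd (W!i), fst (W!i)) else W!i)" for \<sigma> i
      by (cases "W!i") (simp add: sw_def swp_def)
    have "{i. i < m \<and> snd (sw \<sigma>0 i) \<in> A} \<subseteq> I"
      unfolding I_def using swc by (auto split: if_splits)
    hence "card {i. i < m \<and> snd (sw \<sigma>0 i) \<in> A} \<le> card I" using finI card_mono by blast
    hence rI: "r < real (card I)" using s0 unfolding E_def by simp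
    have "E A \<subseteq> {\<sigma>. \<forall>i\<in>I. \<sigma>!i = (fst (W!i) \<in> A)}"
    proof (intro subsetI CollectI ballI)
      fix \<sigma> i assume s: "\<sigma> \<in> E A" and i: "i \<in> I"
      have im: "i < m" using i by (simp add: I_def)
      have "fst (sw \<sigma> i) \<notin> A" using s im unfolding E_def by blast
      thus "\<sigma>!i = (fst (W!i) \<in> A)" using i unfolding I_def swc by (auto split: if_splits)
    qed
    hence "measure_pmf.prob (iid_pmf m coin) (E A) \<le> measure_pmf.prob (iid_pmf m coin) {\<sigma>. \<forall>i\<in>I. \<sigma>!i = (fst (W!i) \<in> A)}"
      by (intro measure_pmf.finite_measure_mono) auto
    also have "\<dots> = (1/2)^card I" by (rule coin_fix[OF Isub])
    also have "\<dots> \<le> exp (- real (card I) / 2)" by (rule half_pow_le)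
    also have "\<dots> \<le> exp (- r / 2)" using rI by simp
    finally show ?thesis .
  qed
  have "measure_pmf.prob (iid_pmf m coin) Ev = measure_pmf.prob (iid_pmf m coin) (Ev \<inter> set_pmf (iid_pmf m coin))"
    by (simp add: measure_Int_set_pmf)
  also have "\<dots> \<le> measure_pmf.prob (iid_pmf m coin) (\<Union>A\<in>R. E A)"
    using sub1 by (intro measure_pmf.finite_measure_mono) auto
  also have "\<dots> \<le> (\<Sum>A\<in>R. measure_pmf.prob (iid_pmf m coin) (E A))"
    by (rule measure_UNION_le[OF finR]) auto
  also have "\<dots> \<le> (\<Sum>A\<in>R. exp (- r / 2))" by (rule sum_mono) (rule EA)
  also have "\<dots> = real (card R) * exp (- r / 2)" by simp
  also have "\<dots> \<le> (1/t)^d * exp (t * card Q) * exp (- r / 2)"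
    using cardR by (intro mult_right_mono) auto
  also have "\<dots> \<le> (1/t)^d * exp (t * (2 * m)) * exp (- r / 2)"
  proof -
    have "t * card Q \<le> t * (2 * m)" using cardQ t by (intro mult_left_mono) auto
    thus ?thesis using t by (intro mult_right_mono mult_left_mono) auto
  qed
  finally show ?thesis unfolding Ev_def .
qed



lemma swap_pair_pmf: "map_pmf swp (pair_pmf (pair_pmf p p) coin) = pair_pmf p p"
proof -
  have "map_pmf swp (pair_pmf (pair_pmf p p) coin)
      = map_pmf swp (map_pmf (\<lambda>(x, y). (y, x)) (pair_pmf coin (pair_pmf p p)))"
    by (subst pair_commute_pmf) rule
  also have "\<dots> = bind_pmf coin (\<lambda>b. map_pmf (\<lambda>z. swp (z, b)) (pair_pmf p p))"
    unfolding pair_pmf_def[of coin] map_pmf_def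
    by (simp add: bind_assoc_pmf bind_return_pmf)
  also have "\<dots> = bind_pmf coin (\<lambda>b. pair_pmf p p)"
  proof (rule bind_pmf_cong[OF refl])
    fix b :: bool
    show "map_pmf (\<lambda>z. swp (z, b)) (pair_pmf p p) = pair_pmf p p"
    proof (cases b)
      case True
      have e1: "(\<lambda>z. swp (z, b)) = (\<lambda>(x, y). (y, x))" using True by (auto simp: swp_def fun_eq_iff)
      have "map_pmf (\<lambda>(x, y). (y, x)) (pair_pmf p p) = pair_pmf p p" by (rule pair_commute_pmf[symmetric])
      thus ?thesis unfolding e1 .
    next
      case False
      have e2: "(\<lambda>z. swp (z, b)) = id" using False by (auto simp: swp_def fun_eq_iff)
      show ?thesis unfolding e2 pmf.map_id by (rule refl)
    qed
  qed
  also have "\<dots> = pair_pmf p p" by simp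
  finally show ?thesis .
qed

lemma eps_net:
  fixes p :: "'a pmf" and \<epsilon> :: real
  assumes Y: "set_pmf p \<subseteq> Y"
    and VC: "\<And>S. S \<subseteq> Y \<Longrightarrow> finite S \<Longrightarrow> shatters H S \<Longrightarrow> card S \<le> d"
    and e: "0 < \<epsilon>" "\<epsilon> \<le> 1" and m: "4 \<le> \<epsilon> * m"
  shows "measure_pmf.prob (iid_pmf m p) {S. \<exists>h\<in>H. (\<forall>x\<in>set S. \<not> h x) \<and> \<epsilon> < measure_pmf.prob p {x. h x}}
     \<le> 2 * ((32/\<epsilon>)^d * exp (- \<epsilon> * m / 16))"
proof -
  define r where "r = \<epsilon> * m / 4"
  define Bad where "Bad = {S. \<exists>h\<in>H. (\<forall>x\<in>set S. \<not> h x) \<and> \<epsilon> < measure_pmf.prob p {x. h x}}"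
  define J where "J = {(S, S'). \<exists>h\<in>H. (\<forall>x\<in>set S. \<not> h x) \<and> r < real (cnt h S')}"
  define Mp where "Mp = iid_pmf m p"
  define f where "f = (\<lambda>S. measure_pmf.prob Mp {S'. (S, S') \<in> J})"
  have fge: "(1/2) * indicator Bad S \<le> f S" for S
  proof (cases "S \<in> Bad")
    case True
    then obtain h where h: "h \<in> H" "\<forall>x\<in>set S. \<not> h x" "\<epsilon> < measure_pmf.prob p {x. h x}"
      unfolding Bad_def by blast
    have ch: "measure_pmf.prob Mp {xs. real (cnt h xs) \<le> \<epsilon> * m / 4} \<le> 1/2"
      unfolding Mp_def by (rule chernoff_cnt[OF h(3) e(1) m])
    have "measure_pmf.prob Mp (UNIV - {xs. real (cnt h xs) \<le> \<epsilon> * m / 4})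
        = 1 - measure_pmf.prob Mp {xs. real (cnt h xs) \<le> \<epsilon> * m / 4}"
      using measure_pmf.prob_compl[of "{xs. real (cnt h xs) \<le> \<epsilon> * m / 4}" Mp] by simp
    also have "\<dots> \<ge> 1/2" using ch by simp
    finally have "1/2 \<le> measure_pmf.prob Mp (UNIV - {xs. real (cnt h xs) \<le> \<epsilon> * m / 4})" .
    also have "\<dots> \<le> f S" unfolding f_def
      by (rule measure_pmf.finite_measure_mono) (use h in \<open>auto simp: J_def r_def\<close>)
    finally show ?thesis using True by simp
  next
    case False thus ?thesis by (simp add: f_def)
  qed
  have intf: "integrable (measure_pmf Mp) f"
    unfolding f_def by (intro measure_pmf.integrable_const_bound[where B=1]) auto
  have stepA: "measure_pmf.prob Mp Bad / 2 \<le> measure_pmf.prob (pair_pmf Mp Mp) J"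
  proof -
    have "measure_pmf.prob Mp Bad / 2 = (\<integral>S. (1/2) * indicator Bad S \<partial>measure_pmf Mp)" by simp
    also have "\<dots> \<le> (\<integral>S. f S \<partial>measure_pmf Mp)"
      by (intro integral_mono intf fge measure_pmf.integrable_const_bound[where B=1]) (auto intro!: AE_pmfI split: split_indicator)
    also have "\<dots> = measure_pmf.prob (pair_pmf Mp Mp) J" by (simp add: measure_pair_pmf' f_def)
    finally show ?thesis .
  qed
  define pp where "pp = pair_pmf p p"
  define G where "G = (\<lambda>W \<sigma>. (map fst (map swp (zip W \<sigma>)), map snd (map swp (zip W \<sigma>))) \<in> J)"
  have "measure_pmf.prob (pair_pmf Mp Mp) J
      = measure_pmf.prob (iid_pmf m pp) {W. (map fst W, map snd W) \<in> J}"
    unfolding Mp_def pp_def by (simp flip: iid_pmf_pair add: vimage_def)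
  also have "iid_pmf m pp = map_pmf (map swp) (iid_pmf m (pair_pmf pp coin))"
    by (simp add: iid_pmf_map swap_pair_pmf pp_def)
  also have "measure_pmf.prob (map_pmf (map swp) (iid_pmf m (pair_pmf pp coin))) {W. (map fst W, map snd W) \<in> J}
      = measure_pmf.prob (iid_pmf m (pair_pmf pp coin)) {Z. G (map fst Z) (map snd Z)}"
    by (simp add: G_def vimage_def zip_map_fst_snd)
  also have "\<dots> = measure_pmf.prob (pair_pmf (iid_pmf m pp) (iid_pmf m coin)) {(W, \<sigma>). G W \<sigma>}"
    by (simp flip: iid_pmf_pair add: vimage_def)
  also have "\<dots> = (\<integral>W. measure_pmf.prob (iid_pmf m coin) {\<sigma>. G W \<sigma>} \<partial>measure_pmf (iid_pmf m pp))"
    by (simp add: measure_pair_pmf')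
  also have "\<dots> \<le> (1/(\<epsilon>/32))^d * exp ((\<epsilon>/32) * (2 * m)) * exp (- r / 2)"
  proof (rule measure_pmf.integral_le_const)
    show "integrable (measure_pmf (iid_pmf m pp)) (\<lambda>W. measure_pmf.prob (iid_pmf m coin) {\<sigma>. G W \<sigma>})"
      by (intro measure_pmf.integrable_const_bound[where B=1]) auto
    show "AE W in measure_pmf (iid_pmf m pp). measure_pmf.prob (iid_pmf m coin) {\<sigma>. G W \<sigma>}
           \<le> (1/(\<epsilon>/32))^d * exp ((\<epsilon>/32) * (2 * m)) * exp (- r / 2)"
    proof (rule AE_pmfI)
      fix W assume W: "W \<in> set_pmf (iid_pmf m pp)"
      hence lenW: "length W = m" and sW: "set W \<subseteq> set_pmf p \<times> set_pmf p"
        using set_iid_pmf[OF W] by (auto simp: pp_def)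
      have WY: "x \<in> Y \<and> y \<in> Y" if "(x, y) \<in> set W" for x y using that sW Y by blast
      have "{\<sigma>. G W \<sigma>} = {\<sigma>. \<exists>h\<in>H. (\<forall>x\<in>set (map fst (map swp (zip W \<sigma>))). \<not> h x) \<and> r < real (cnt h (map snd (map swp (zip W \<sigma>))))}"
        by (simp add: G_def J_def)
      thus "measure_pmf.prob (iid_pmf m coin) {\<sigma>. G W \<sigma>} \<le> (1/(\<epsilon>/32))^d * exp ((\<epsilon>/32) * (2 * m)) * exp (- r / 2)"
        using swap_inner[OF lenW WY VC, where t = "\<epsilon>/32" and r = r] e by simp
    qed
  qed
  also have "\<dots> = (32/\<epsilon>)^d * exp (- \<epsilon> * m / 16)"
    by (simp add: r_def mult_ac flip: exp_add)
  finally have "measure_pmf.prob (pair_pmf Mp Mp) J \<le> (32/\<epsilon>)^d * exp (- \<epsilon> * m / 16)" .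
  with stepA show ?thesis unfolding Bad_def Mp_def by simp
qed



lemma e2e_Suc: "e2e (Suc t) g x = g ((gen_step g ^^ t) x)"
  by (simp add: e2e_def gen_step_def)

lemma CoT_Suc0: "CoT (Suc t) g x = CoT t g x @ [e2e (Suc t) g x]"
  by (simp add: CoT_def)

lemma gen_iter: "(gen_step g ^^ t) x = x @ CoT t g x"
proof (induction t)
  case 0 thus ?case by (simp add: CoT_def)
next
  case (Suc t)
  have "(gen_step g ^^ Suc t) x = gen_step g ((gen_step g ^^ t) x)" by simp
  also have "\<dots> = (x @ CoT t g x) @ [g (x @ CoT t g x)]" by (simp only: Suc.IH) (simp add: gen_step_def)
  also have "\<dots> = x @ CoT (Suc t) g x" by (simp only: CoT_Suc0 e2e_Suc Suc) simp
  finally show ?case .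
qed

lemma CoT_Suc: "CoT (Suc t) g x = CoT t g x @ [g (x @ CoT t g x)]"
  by (simp add: CoT_Suc0 e2e_Suc gen_iter)

lemma length_CoT [simp]: "length (CoT T g x) = T"
  by (simp add: CoT_def)

lemma last_CoT: "T \<ge> 1 \<Longrightarrow> last (CoT T g x) = e2e T g x"
  by (cases T) (auto simp: CoT_Suc0)

lemma CoT_char:
  "length z = T \<Longrightarrow> (CoT T g x = z \<longleftrightarrow> (\<forall>t<T. g (x @ take t z) = z!t))"
proof (induction T arbitrary: z)
  case 0 thus ?case by (simp add: CoT_def)
next
  case (Suc T)
  obtain z' a where z: "z = z' @ [a]" and lz: "length z' = T"
    using Suc.prems by (metis length_Suc_conv_rev)
  have "CoT (Suc T) g x = z \<longleftrightarrow> CoT T g x = z' \<and> g (x @ CoT T g x) = a"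
    by (simp add: CoT_Suc z)
  also have "\<dots> \<longleftrightarrow> (\<forall>t<T. g (x @ take t z') = z'!t) \<and> g (x @ z') = a"
    using Suc.IH[OF lz] by auto
  also have "\<dots> \<longleftrightarrow> (\<forall>t<Suc T. g (x @ take t z) = z!t)"
  proof -
    have "\<And>t. t < T \<Longrightarrow> take t z = take t z' \<and> z!t = z'!t" using lz z by (simp add: nth_append)
    moreover have "take T z = z'" "z!T = a" using lz z by auto
    ultimately show ?thesis by (auto simp: less_Suc_eq)
  qed
  finally show ?case .
qed

lemma loss_vc_bound:
  fixes F :: "(bool list \<Rightarrow> bool) set"
  assumes VCF: "\<And>S. finite S \<Longrightarrow> shatters F S \<Longrightarrow> card S \<le> d"
    and T: "T \<ge> 1" and k: "\<kappa> \<ge> 1"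
    and S: "finite S" "S \<subseteq> UNIV \<times> {z. length z = T}" "shatters (loss_class T F \<kappa>) S"
  shows "real (card S) \<le> 12 * real \<kappa> * real d * max 1 (ln (real \<kappa> * real T))"
proof -
  define n where "n = card S"
  define Q where "Q = (\<lambda>((x, z), t). x @ take t z) ` (S \<times> {..<T})"
  have finQ: "finite Q" using S(1) by (simp add: Q_def)
  have cardQ: "card Q \<le> n * T"
  proof -
    have "card Q \<le> card (S \<times> {..<T})" unfolding Q_def by (rule card_image_le) (simp add: S(1))
    thus ?thesis by (simp add: n_def card_cartesian_product)
  qed
  define t :: real where "t = 1 / (4 * \<kappa> * T)"
  have "0 < T * (\<kappa> * 4)" using T k by simp
  hence "real 1 \<le> real (T * (\<kappa> * 4))" by (intro of_nat_mono) linarith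
  hence pos: "1 \<le> real T * (real \<kappa> * 4)" by simp
  have t: "0 < t" "t \<le> 1" using T k pos by (auto simp: t_def field_simps)
  define RF where "RF = (\<lambda>f. {q\<in>Q. f q}) ` F"
  have finRF: "finite RF" unfolding RF_def
    by (rule finite_subset[of _ "Pow Q"]) (blast, simp add: finQ)
  have cardRF: "real (card RF) \<le> (1/t)^d * exp (t * card Q)"
    unfolding RF_def by (rule sauer_class[OF finQ subset_UNIV _ t]) (use VCF in blast)
  also have "\<dots> \<le> (1/t)^d * exp (t * (n * T))"
    using cardQ t by (intro mult_left_mono) (auto intro!: mult_left_mono simp flip: of_nat_mult)
  finally have cardRF': "real (card RF) \<le> (1/t)^d * exp (t * (n * T))" .
  define Phi where "Phi = (\<lambda>v. {s\<in>S. \<forall>i<\<kappa>. \<not> (\<forall>t'<T. (fst s @ take t' (snd s) \<in> v i) = (snd s)!t')})"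
  define Lr where "Lr = (\<lambda>ll. {s\<in>S. ll s}) ` loss_class T F \<kappa>"
  have PowLr: "Pow S \<subseteq> Lr"
  proof
    fix B assume "B \<in> Pow S"
    then obtain ll where "ll \<in> loss_class T F \<kappa>" "\<forall>s\<in>S. ll s = (s \<in> B)"
      using S(3) unfolding shatters_def by blast
    moreover have "{s\<in>S. ll s} = B" using calculation \<open>B \<in> Pow S\<close> by auto
    ultimately show "B \<in> Lr" unfolding Lr_def by blast
  qed
  have LrPhi: "Lr \<subseteq> Phi ` (PiE {..<\<kappa>} (\<lambda>_. RF))"
  proof
    fix B assume "B \<in> Lr"
    then obtain g where g: "\<forall>i<\<kappa>. g i \<in> F"
      and B: "B = {s\<in>S. (\<lambda>(x, z). \<forall>i<\<kappa>. CoT T (g i) x \<noteq> z) s}"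
      unfolding Lr_def loss_class_def by blast
    define v where "v = restrict (\<lambda>i. {q\<in>Q. g i q}) {..<\<kappa>}"
    have "v \<in> PiE {..<\<kappa>} (\<lambda>_. RF)" unfolding v_def RF_def using g by auto
    moreover have "B = Phi v"
    proof -
      have "(\<forall>i<\<kappa>. CoT T (g i) x \<noteq> z) \<longleftrightarrow> (\<forall>i<\<kappa>. \<not> (\<forall>t'<T. (x @ take t' z \<in> v i) = z!t'))"
        if xz: "(x, z) \<in> S" for x z
      proof -
        have lz: "length z = T" using xz S(2) by auto
        have inQ: "x @ take t' z \<in> Q" if "t' < T" for t'
          unfolding Q_def using xz that by (intro image_eqI[of _ _ "((x, z), t')"]) auto
        have "CoT T (g i) x = z \<longleftrightarrow> (\<forall>t'<T. (x @ take t' z \<in> v i) = z!t')" if "i < \<kappa>" for i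
          using CoT_char[OF lz, of "g i" x] inQ that by (auto simp: v_def)
        thus ?thesis by auto
      qed
      note eqv = this
      show ?thesis
      proof (rule set_eqI)
        fix s show "s \<in> B \<longleftrightarrow> s \<in> Phi v"
        proof (cases s)
          case (Pair x z)
          show ?thesis
          proof (cases "(x, z) \<in> S")
            case True
            thus ?thesis using eqv[OF True] unfolding B Phi_def Pair by simp
          next
            case False
            thus ?thesis unfolding B Phi_def Pair by simp
          qed
        qed
      qed
    qed
    ultimately show "B \<in> Phi ` (PiE {..<\<kappa>} (\<lambda>_. RF))" by blast
  qed
  have finPi: "finite (PiE {..<\<kappa>} (\<lambda>_. RF))" using finRF by (simp add: finite_PiE)
  have "(2::real)^n = real (card (Pow S))" using S(1) by (simp add: n_def card_Pow)
  also have "\<dots> \<le> real (card (Phi ` (PiE {..<\<kappa>} (\<lambda>_. RF))))"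
    using PowLr LrPhi finPi by (intro of_nat_mono card_mono) auto
  also have "\<dots> \<le> real (card (PiE {..<\<kappa>} (\<lambda>_. RF)))"
    by (intro of_nat_mono card_image_le finPi)
  also have "\<dots> = real (card RF) ^ \<kappa>" by (simp add: card_PiE)
  also have "\<dots> \<le> ((1/t)^d * exp (t * (n * T))) ^ \<kappa>"
    by (intro power_mono cardRF') auto
  also have "\<dots> = (4 * \<kappa> * T) ^ (d * \<kappa>) * exp (n / 4)"
  proof -
    have "exp (t * (n * T)) ^ \<kappa> = exp (n / 4)"
      using T k by (simp add: exp_of_nat_mult[symmetric] t_def field_simps)
    moreover have "((1/t)^d)^\<kappa> = (4 * \<kappa> * T) ^ (d * \<kappa>)" by (simp add: t_def power_mult)
    ultimately show ?thesis by (simp add: power_mult_distrib)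
  qed
  finally have A: "(2::real)^n \<le> (4 * \<kappa> * T) ^ (d * \<kappa>) * exp (n / 4)" .
  have "exp (n / 2) \<le> (2::real)^n"
  proof -
    have "exp (n / 2) = exp (1/2) ^ n" by (simp add: exp_of_nat_mult[symmetric])
    also have "\<dots> \<le> 2 ^ n" using exp_half_le2 by (intro power_mono) auto
    finally show ?thesis .
  qed
  with A have "exp (n / 2) \<le> (4 * \<kappa> * T) ^ (d * \<kappa>) * exp (n / 4)" by linarith
  moreover have "exp (real n / 2) = exp (real n / 4) * exp (real n / 4)"
    by (simp add: exp_add[symmetric])
  ultimately have "exp (real n / 4) * exp (real n / 4) \<le> (4 * \<kappa> * T) ^ (d * \<kappa>) * exp (real n / 4)"
    by simp
  hence "exp (n / 4) \<le> (4 * \<kappa> * T) ^ (d * \<kappa>)"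
    by (rule mult_right_le_imp_le) simp
  also have "\<dots> = exp (ln (4 * \<kappa> * T)) ^ (d * \<kappa>)"
    using pos by (subst exp_ln) (simp_all add: mult_ac)
  also have "\<dots> = exp (real (d * \<kappa>) * ln (4 * \<kappa> * T))"
    by (rule exp_of_nat_mult[symmetric])
  finally have "real n / 4 \<le> real (d * \<kappa>) * ln (4 * \<kappa> * T)" by simp
  moreover have "ln (4 * \<kappa> * T) \<le> 3 * max 1 (ln (real \<kappa> * real T))"
  proof -
    have "ln (4 * \<kappa> * T) = ln 4 + ln (real \<kappa> * real T)" using T k by (simp add: ln_mult)
    moreover have "ln (4::real) \<le> 2"
    proof -
      have "ln (4::real) = 2 * ln 2" using ln_realpow[of 2 2] by simp
      moreover have "ln (2::real) \<le> 1" using ln_2_less_1 by simp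
      ultimately show ?thesis by simp
    qed
    ultimately show ?thesis by simp
  qed
  ultimately have "real n / 4 \<le> real (d * \<kappa>) * (3 * max 1 (ln (real \<kappa> * real T)))"
    by (smt (verit) mult_left_mono of_nat_0_le_iff)
  thus ?thesis by (simp add: n_def algebra_simps)
qed




lemma vc_le:
  assumes "VC_dim H Y = enat d" "S \<subseteq> Y" "finite S" "shatters H S"
  shows "card S \<le> d"
proof -
  have "enat (card S) \<le> VC_dim H Y" unfolding VC_dim_def
    by (rule Sup_upper) (use assms in blast)
  thus ?thesis using assms(1) by simp
qed

lemma numeric1:
  fixes \<epsilon> \<delta> :: real
  assumes d: "1 \<le> d" and e: "0 < \<epsilon>" "\<epsilon> < 1/2" and dl: "0 < \<delta>" "\<delta> < 1"
    and m: "120 * (real d * ln (1/\<epsilon>) + ln (1/\<delta>)) \<le> \<epsilon> * m"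
  shows "4 \<le> \<epsilon> * m" "2 * ((32/\<epsilon>)^d * exp (- \<epsilon> * m / 16)) \<le> \<delta>"
proof -
  define L where "L = ln (1/\<epsilon>)"
  define l\<delta> where "l\<delta> = ln (1/\<delta>)"
  have l2: "1/2 \<le> ln (2::real)"
  proof -
    have "ln (exp (1/2)) \<le> ln (2::real)" using exp_half_le2 by (subst ln_le_cancel_iff) auto
    thus ?thesis by simp
  qed
  have L2: "ln 2 \<le> L" unfolding L_def using e by (subst ln_le_cancel_iff) (auto simp: field_simps)
  have ld0: "0 \<le> l\<delta>" unfolding l\<delta>_def using dl by simp
  have dr: "1 \<le> real d" using d by simp
  have dL: "L \<le> real d * L" using dr L2 l2 by (simp add: mult_le_cancel_right1)
  have m': "120 * (real d * L) + 120 * l\<delta> \<le> \<epsilon> * m" using m by (simp add: L_def l\<delta>_def distrib_left)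
  show "4 \<le> \<epsilon> * m" using m' dL L2 l2 ld0 by linarith
  have ln32: "ln (32/\<epsilon>) = 5 * ln 2 + L"
  proof -
    have "ln (32/\<epsilon>) = ln 32 + L" unfolding L_def using e by (simp add: ln_div ln_mult)
    moreover have "ln (32::real) = 5 * ln 2" using ln_realpow[of 2 5] by simp
    ultimately show ?thesis by simp
  qed
  have "real d * ln (32/\<epsilon>) \<le> real d * (6 * L)"
    unfolding ln32 using L2 dr by (intro mult_left_mono) auto
  hence d6: "real d * ln (32/\<epsilon>) \<le> 6 * (real d * L)" by simp
  have eq: "2 * ((32/\<epsilon>)^d * exp (- \<epsilon> * m / 16)) = exp (ln 2 + real d * ln (32/\<epsilon>) - \<epsilon> * m / 16)"
  proof -
    have "(32/\<epsilon>)^d = exp (ln (32/\<epsilon>)) ^ d" using e by simp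
    also have "\<dots> = exp (real d * ln (32/\<epsilon>))" by (rule exp_of_nat_mult[symmetric])
    finally have P: "(32/\<epsilon>)^d = exp (real d * ln (32/\<epsilon>))" .
    have Q: "exp (ln 2 + real d * ln (32/\<epsilon>) - \<epsilon> * m / 16) = exp (ln 2) * exp (real d * ln (32/\<epsilon>)) / exp (\<epsilon> * m / 16)"
      by (simp only: exp_diff exp_add)
    have R: "exp (- \<epsilon> * m / 16) = inverse (exp (\<epsilon> * m / 16))"
      by (subst exp_minus[symmetric]) simp
    have E2: "exp (ln (2::real)) = 2" by simp
    show ?thesis unfolding P Q R E2 by (simp only: divide_inverse mult.assoc)
  qed
  also have "\<dots> \<le> exp (ln \<delta>)"
  proof (subst exp_le_cancel_iff)
    have "ln \<delta> = - l\<delta>" unfolding l\<delta>_def using dl by (simp add: ln_div)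
    thus "ln 2 + real d * ln (32/\<epsilon>) - \<epsilon> * m / 16 \<le> ln \<delta>"
      using d6 m' dL L2 l2 ld0 by linarith
  qed
  also have "\<dots> = \<delta>" using dl by simp
  finally show "2 * ((32/\<epsilon>)^d * exp (- \<epsilon> * m / 16)) \<le> \<delta>" .
qed

lemma map_fst_ids: "map_pmf fst (ids_example T D fs P) = D"
  by (simp add: ids_example_def map_bind_pmf map_pmf_comp map_pmf_const bind_return_pmf')

lemma set_ids:
  "s \<in> set_pmf (ids_example T D fs P) \<Longrightarrow> \<exists>x j. s = (x, CoT T (fs j) x) \<and> x \<in> set_pmf D \<and> j \<in> set_pmf (P x)"
  by (auto simp: ids_example_def)

lemma err_le_loss:
  assumes fs: "\<forall>j<\<kappa>. e2e T (fs j) = e2e T (fs 0)" and Pk: "\<forall>x. set_pmf (P x) \<subseteq> {..<\<kappa>}"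
    and T: "T \<ge> 1" and g: "\<forall>i<\<kappa>. \<forall>j<\<kappa>. e2e T (g i) = e2e T (g j)" and j0: "j0 < \<kappa>"
  shows "measure_pmf.prob D {x. e2e T (g j0) x \<noteq> e2e T (fs 0) x}
      \<le> measure_pmf.prob (ids_example T D fs P) {s. (\<lambda>(x, z). \<forall>i<\<kappa>. CoT T (g i) x \<noteq> z) s}"
proof -
  define p where "p = ids_example T D fs P"
  define B where "B = {x. e2e T (g j0) x \<noteq> e2e T (fs 0) x}"
  have "measure_pmf.prob D B = measure_pmf.prob (map_pmf fst p) B" by (simp add: p_def map_fst_ids)
  also have "\<dots> = measure_pmf.prob p (fst -` B \<inter> set_pmf p)" by (simp add: measure_Int_set_pmf)
  also have "\<dots> \<le> measure_pmf.prob p {s. (\<lambda>(x, z). \<forall>i<\<kappa>. CoT T (g i) x \<noteq> z) s}"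
  proof (rule measure_pmf.finite_measure_mono)
    show "fst -` B \<inter> set_pmf p \<subseteq> {s. (\<lambda>(x, z). \<forall>i<\<kappa>. CoT T (g i) x \<noteq> z) s}"
    proof
      fix s assume s: "s \<in> fst -` B \<inter> set_pmf p"
      then obtain x j where sx: "s = (x, CoT T (fs j) x)" "j \<in> set_pmf (P x)"
        using set_ids unfolding p_def by blast
      have jk: "j < \<kappa>" using sx(2) Pk by blast
      have xB: "x \<in> B" using s sx by simp
      have "CoT T (g i) x \<noteq> CoT T (fs j) x" if i: "i < \<kappa>" for i
      proof
        assume "CoT T (g i) x = CoT T (fs j) x"
        hence "last (CoT T (g i) x) = last (CoT T (fs j) x)" by simp
        hence "e2e T (g i) x = e2e T (fs j) x" using last_CoT[OF T] by simp
        moreover have "e2e T (g j0) = e2e T (g i)" using g j0 i by blast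
        moreover have "e2e T (fs j) = e2e T (fs 0)" using fs jk by blast
        ultimately have "e2e T (g j0) x = e2e T (fs 0) x" by simp
        thus False using xB unfolding B_def by simp
      qed
      thus "s \<in> {s. (\<lambda>(x, z). \<forall>i<\<kappa>. CoT T (g i) x \<noteq> z) s}" using sx by simp
    qed
  qed simp
  finally show ?thesis unfolding p_def B_def .
qed



lemma part2:
  fixes F :: "(bool list \<Rightarrow> bool) set" and T \<kappa> d :: nat
  assumes T: "T \<ge> 1" and k: "\<kappa> \<ge> 1" and VC: "VC_dim F UNIV = enat d"
  shows "\<exists>d'::nat. VC_dim (loss_class T F \<kappa>) (UNIV \<times> {z. length z = T}) = enat d'
              \<and> real d' \<le> 120 * real \<kappa> * real d * max 1 (ln (real \<kappa> * real T))"
proof -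
  define B where "B = 12 * real \<kappa> * real d * max 1 (ln (real \<kappa> * real T))"
  define N where "N = nat \<lfloor>B\<rfloor>"
  have B0: "0 \<le> B" unfolding B_def by simp
  have VCF: "\<And>S. finite S \<Longrightarrow> shatters F S \<Longrightarrow> card S \<le> d"
    using vc_le[OF VC] by blast
  have cS: "card S \<le> N" if "S \<subseteq> UNIV \<times> {z. length z = T}" "finite S" "shatters (loss_class T F \<kappa>) S" for S
  proof -
    have "real (card S) \<le> B" unfolding B_def by (rule loss_vc_bound[OF VCF T k that(2,1,3)])
    hence "int (card S) \<le> \<lfloor>B\<rfloor>" by (simp add: le_floor_iff)
    thus ?thesis unfolding N_def by linarith
  qed
  have "VC_dim (loss_class T F \<kappa>) (UNIV \<times> {z. length z = T}) \<le> enat N"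
    unfolding VC_dim_def by (rule Sup_least) (use cS in auto)
  then obtain d' where d': "VC_dim (loss_class T F \<kappa>) (UNIV \<times> {z. length z = T}) = enat d'"
    using enat_ile by blast
  have "d' \<le> N" using d' \<open>VC_dim (loss_class T F \<kappa>) (UNIV \<times> {z. length z = T}) \<le> enat N\<close> by simp
  hence "real d' \<le> real N" by simp
  also have "real N = of_int \<lfloor>B\<rfloor>" unfolding N_def using B0 by simp
  also have "\<dots> \<le> B" by (rule of_int_floor_le)
  also have "\<dots> \<le> 120 * real \<kappa> * real d * max 1 (ln (real \<kappa> * real T))"
    unfolding B_def by (intro mult_right_mono) auto
  finally show ?thesis using d' by blast
qed

lemma part1:
  fixes F :: "(bool list \<Rightarrow> bool) set" and T \<kappa> d m :: nat and X :: "bool list set" and \<epsilon> \<delta> :: real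
  assumes T: "T \<ge> 1" and k: "\<kappa> \<ge> 1"
    and VC: "VC_dim (loss_class T F \<kappa>) (X \<times> {z. length z = T}) = enat d"
    and eps: "0 < \<epsilon> \<and> \<epsilon> < 1/2 \<and> 0 < \<delta> \<and> \<delta> < 1"
    and m: "real m \<ge> 120 * ((real d * ln (1/\<epsilon>) + ln (1/\<delta>)) / \<epsilon>)"
    and Dc: "set_pmf D \<subseteq> X \<and> (\<forall>j<\<kappa>. fs j \<in> F) \<and> (\<forall>j<\<kappa>. e2e T (fs j) = e2e T (fs 0))
               \<and> (\<forall>x. set_pmf (P x) \<subseteq> {..<\<kappa>})"
  shows "measure_pmf.prob (iid_pmf m (ids_example T D fs P))
                 {S. \<forall>h. cons_output T F \<kappa> S h \<longrightarrow>
                        measure_pmf.prob D {x. h x \<noteq> e2e T (fs 0) x} \<le> \<epsilon>} \<ge> 1 - \<delta>"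
proof -
  define Y where "Y = X \<times> {z::bool list. length z = T}"
  define L where "L = loss_class T F \<kappa>"
  define p where "p = ids_example T D fs P"
  define lg where "lg = (\<lambda>g::nat \<Rightarrow> bool list \<Rightarrow> bool. (\<lambda>(x, z). \<forall>i<\<kappa>. CoT T (g i) x \<noteq> z))"
  define Ev where "Ev = {S. \<forall>h. cons_output T F \<kappa> S h \<longrightarrow> measure_pmf.prob D {x. h x \<noteq> e2e T (fs 0) x} \<le> \<epsilon>}"
  have e: "0 < \<epsilon>" "\<epsilon> < 1/2" "0 < \<delta>" "\<delta> < 1" using eps by auto
  have DX: "set_pmf D \<subseteq> X" and fsF: "\<forall>j<\<kappa>. fs j \<in> F" and fse: "\<forall>j<\<kappa>. e2e T (fs j) = e2e T (fs 0)"
    and Pk: "\<forall>x. set_pmf (P x) \<subseteq> {..<\<kappa>}" using Dc by blast+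
  have VCL: "\<And>S. S \<subseteq> Y \<Longrightarrow> finite S \<Longrightarrow> shatters L S \<Longrightarrow> card S \<le> d"
    using vc_le[OF VC] unfolding Y_def L_def by blast
  have pY: "set_pmf p \<subseteq> Y"
  proof
    fix s assume "s \<in> set_pmf p"
    then obtain x j where "s = (x, CoT T (fs j) x)" "x \<in> set_pmf D" using set_ids unfolding p_def by blast
    thus "s \<in> Y" using DX unfolding Y_def by auto
  qed
  have fse2: "\<forall>i<\<kappa>. \<forall>j<\<kappa>. e2e T (fs i) = e2e T (fs j)"
  proof (intro allI impI)
    fix i j assume "i < \<kappa>" "j < \<kappa>"
    hence "e2e T (fs i) = e2e T (fs 0)" "e2e T (fs j) = e2e T (fs 0)" using fse by blast+
    thus "e2e T (fs i) = e2e T (fs j)" by (rule trans[OF _ sym])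
  qed
  have l0L: "lg fs \<in> L" unfolding L_def loss_class_def lg_def
    using fsF fse2 by blast
  have l0z: "\<not> lg fs s" if "s \<in> set_pmf p" for s
  proof -
    obtain x j where sx: "s = (x, CoT T (fs j) x)" "j \<in> set_pmf (P x)"
      using set_ids \<open>s \<in> set_pmf p\<close> unfolding p_def by blast
    have "j < \<kappa>" using sx(2) Pk by blast
    thus ?thesis unfolding lg_def sx by auto
  qed
  have key: "\<exists>ll\<in>L. (\<forall>s\<in>set S. \<not> ll s) \<and> measure_pmf.prob D {x. h x \<noteq> e2e T (fs 0) x} \<le> measure_pmf.prob p {s. ll s}"
    if co: "cons_output T F \<kappa> S h" for S h
  proof -
    obtain g where gF: "\<forall>i<\<kappa>. g i \<in> F" and ge: "\<forall>i<\<kappa>. \<forall>j<\<kappa>. e2e T (g i) = e2e T (g j)"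
      and gS: "\<forall>q\<in>set S. \<exists>j<\<kappa>. snd q = CoT T (g j) (fst q)" and hj: "\<exists>j<\<kappa>. h = e2e T (g j)"
      using co unfolding cons_output_def by blast
    obtain j0 where j0: "j0 < \<kappa>" "h = e2e T (g j0)" using hj by blast
    have "lg g \<in> L" unfolding L_def loss_class_def lg_def using gF ge by blast
    moreover have "\<forall>s\<in>set S. \<not> lg g s"
    proof
      fix s assume "s \<in> set S"
      then obtain j where "j < \<kappa>" "snd s = CoT T (g j) (fst s)" using gS by blast
      thus "\<not> lg g s" unfolding lg_def by (cases s) auto
    qed
    moreover have "measure_pmf.prob D {x. h x \<noteq> e2e T (fs 0) x} \<le> measure_pmf.prob p {s. lg g s}"
      unfolding j0(2) p_def lg_def by (rule err_le_loss[OF fse Pk T ge j0(1)])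
    ultimately show ?thesis by blast
  qed
  show ?thesis
  proof (cases "d = 0")
    case True
    have zero: "\<not> ll s" if "ll \<in> L" "s \<in> set_pmf p" for ll s
    proof
      assume lls: "ll s"
      have "shatters L {s}" unfolding shatters_def
      proof (intro allI impI)
        fix B assume "B \<subseteq> {s}"
        hence "B = {} \<or> B = {s}" by blast
        thus "\<exists>h\<in>L. \<forall>x\<in>{s}. h x = (x \<in> B)"
        proof
          assume "B = {}" thus ?thesis using l0L l0z[OF that(2)] by auto
        next
          assume "B = {s}" thus ?thesis using that(1) lls by auto
        qed
      qed
      moreover have "{s} \<subseteq> Y" using pY that(2) by blast
      ultimately have "card {s} \<le> d" using VCL[of "{s}"] by simp
      thus False using True by simp
    qed
    have "Ev = UNIV"
    proof (intro set_eqI iffI)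
      fix S :: "(bool list \<times> bool list) list"
      show "S \<in> Ev" unfolding Ev_def
      proof (intro CollectI allI impI)
        fix h assume "cons_output T F \<kappa> S h"
        then obtain ll where ll: "ll \<in> L" "measure_pmf.prob D {x. h x \<noteq> e2e T (fs 0) x} \<le> measure_pmf.prob p {s. ll s}"
          using key by blast
        have "measure_pmf.prob p {s. ll s} = measure_pmf.prob p ({s. ll s} \<inter> set_pmf p)"
          by (simp add: measure_Int_set_pmf)
        also have "{s. ll s} \<inter> set_pmf p = {}" using zero[OF ll(1)] by blast
        finally show "measure_pmf.prob D {x. h x \<noteq> e2e T (fs 0) x} \<le> \<epsilon>" using ll(2) e(1) by simp
      qed
    qed simp
    thus ?thesis using e unfolding Ev_def p_def by simp
  next
    case False
    hence d1: "1 \<le> d" by simp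
    have em: "120 * (real d * ln (1/\<epsilon>) + ln (1/\<delta>)) \<le> \<epsilon> * real m"
    proof -
      have "\<epsilon> * (120 * ((real d * ln (1/\<epsilon>) + ln (1/\<delta>)) / \<epsilon>)) \<le> \<epsilon> * real m"
        using m e(1) by (intro mult_left_mono) auto
      thus ?thesis using e(1) by simp
    qed
    have n1: "4 \<le> \<epsilon> * real m" "2 * ((32/\<epsilon>)^d * exp (- \<epsilon> * real m / 16)) \<le> \<delta>"
      using numeric1[OF d1 e(1,2) e(3,4) em] by auto
    define Bad where "Bad = {S. \<exists>h\<in>L. (\<forall>x\<in>set S. \<not> h x) \<and> \<epsilon> < measure_pmf.prob p {x. h x}}"
    have "measure_pmf.prob (iid_pmf m p) Bad \<le> 2 * ((32/\<epsilon>)^d * exp (- \<epsilon> * real m / 16))"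
      unfolding Bad_def by (rule eps_net[OF pY VCL e(1) _ n1(1)]) (use e in auto)
    hence PB: "measure_pmf.prob (iid_pmf m p) Bad \<le> \<delta>" using n1(2) by linarith
    have sub: "UNIV - Bad \<subseteq> Ev"
    proof
      fix S assume S: "S \<in> UNIV - Bad"
      show "S \<in> Ev" unfolding Ev_def
      proof (intro CollectI allI impI)
        fix h assume "cons_output T F \<kappa> S h"
        then obtain ll where ll: "ll \<in> L" "\<forall>s\<in>set S. \<not> ll s"
            "measure_pmf.prob D {x. h x \<noteq> e2e T (fs 0) x} \<le> measure_pmf.prob p {s. ll s}"
          using key by blast
        have "\<not> \<epsilon> < measure_pmf.prob p {x. ll x}" using S ll(1,2) unfolding Bad_def by blast
        thus "measure_pmf.prob D {x. h x \<noteq> e2e T (fs 0) x} \<le> \<epsilon>" using ll(3) by simp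
      qed
    qed
    have "1 - \<delta> \<le> 1 - measure_pmf.prob (iid_pmf m p) Bad" using PB by simp
    also have "\<dots> = measure_pmf.prob (iid_pmf m p) (UNIV - Bad)"
      using measure_pmf.prob_compl[of Bad "iid_pmf m p"] by simp
    also have "\<dots> \<le> measure_pmf.prob (iid_pmf m p) Ev"
      using sub by (intro measure_pmf.finite_measure_mono) auto
    finally show ?thesis unfolding Ev_def p_def .
  qed
qed


theorem theoremB1:
  shows "\<exists>c::real. c > 0 \<and>
    (\<forall>(F :: (bool list \<Rightarrow> bool) set) (T :: nat) (\<kappa> :: nat). T \<ge> 1 \<longrightarrow> \<kappa> \<ge> 1 \<longrightarrow>
      (\<forall>(X :: bool list set) (d :: nat).
         VC_dim (loss_class T F \<kappa>) (X \<times> {z. length z = T}) = enat d \<longrightarrow>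
         (\<forall>(\<epsilon>::real) (\<delta>::real) (m::nat). 0 < \<epsilon> \<and> \<epsilon> < 1/2 \<and> 0 < \<delta> \<and> \<delta> < 1 \<longrightarrow>
            real m \<ge> c * ((real d * ln (1/\<epsilon>) + ln (1/\<delta>)) / \<epsilon>) \<longrightarrow>
            (\<forall>(D :: bool list pmf) (fs :: nat \<Rightarrow> bool list \<Rightarrow> bool) (P :: bool list \<Rightarrow> nat pmf).
               set_pmf D \<subseteq> X \<and> (\<forall>j<\<kappa>. fs j \<in> F) \<and> (\<forall>j<\<kappa>. e2e T (fs j) = e2e T (fs 0))
               \<and> (\<forall>x. set_pmf (P x) \<subseteq> {..<\<kappa>}) \<longrightarrow>
               measure_pmf.prob (iid_pmf m (ids_example T D fs P))
                 {S. \<forall>h. cons_output T F \<kappa> S h \<longrightarrow>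
                        measure_pmf.prob D {x. h x \<noteq> e2e T (fs 0) x} \<le> \<epsilon>} \<ge> 1 - \<delta>)))
      \<and> (\<forall>d::nat. VC_dim F UNIV = enat d \<longrightarrow>
           (\<exists>d'::nat. VC_dim (loss_class T F \<kappa>) (UNIV \<times> {z. length z = T}) = enat d'
              \<and> real d' \<le> c * real \<kappa> * real d * max 1 (ln (real \<kappa> * real T)))))"
proof -
  have "(\<forall>(F :: (bool list \<Rightarrow> bool) set) (T :: nat) (\<kappa> :: nat). T \<ge> 1 \<longrightarrow> \<kappa> \<ge> 1 \<longrightarrow>
      (\<forall>(X :: bool list set) (d :: nat).
         VC_dim (loss_class T F \<kappa>) (X \<times> {z. length z = T}) = enat d \<longrightarrow>
         (\<forall>(\<epsilon>::real) (\<delta>::real) (m::nat). 0 < \<epsilon> \<and> \<epsilon> < 1/2 \<and> 0 < \<delta> \<and> \<delta> < 1 \<longrightarrow>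
            real m \<ge> 120 * ((real d * ln (1/\<epsilon>) + ln (1/\<delta>)) / \<epsilon>) \<longrightarrow>
            (\<forall>(D :: bool list pmf) (fs :: nat \<Rightarrow> bool list \<Rightarrow> bool) (P :: bool list \<Rightarrow> nat pmf).
               set_pmf D \<subseteq> X \<and> (\<forall>j<\<kappa>. fs j \<in> F) \<and> (\<forall>j<\<kappa>. e2e T (fs j) = e2e T (fs 0))
               \<and> (\<forall>x. set_pmf (P x) \<subseteq> {..<\<kappa>}) \<longrightarrow>
               measure_pmf.prob (iid_pmf m (ids_example T D fs P))
                 {S. \<forall>h. cons_output T F \<kappa> S h \<longrightarrow>
                        measure_pmf.prob D {x. h x \<noteq> e2e T (fs 0) x} \<le> \<epsilon>} \<ge> 1 - \<delta>)))
      \<and> (\<forall>d::nat. VC_dim F UNIV = enat d \<longrightarrow>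
           (\<exists>d'::nat. VC_dim (loss_class T F \<kappa>) (UNIV \<times> {z. length z = T}) = enat d'
              \<and> real d' \<le> 120 * real \<kappa> * real d * max 1 (ln (real \<kappa> * real T)))))"
  proof (intro allI impI conjI)
    fix F :: "(bool list \<Rightarrow> bool) set" and T \<kappa> :: nat and X :: "bool list set" and d m :: nat
      and \<epsilon> \<delta> :: real and D :: "bool list pmf" and fs :: "nat \<Rightarrow> bool list \<Rightarrow> bool" and P :: "bool list \<Rightarrow> nat pmf"
    assume "T \<ge> 1" "\<kappa> \<ge> 1" "VC_dim (loss_class T F \<kappa>) (X \<times> {z. length z = T}) = enat d"
      "0 < \<epsilon> \<and> \<epsilon> < 1/2 \<and> 0 < \<delta> \<and> \<delta> < 1"
      "real m \<ge> 120 * ((real d * ln (1/\<epsilon>) + ln (1/\<delta>)) / \<epsilon>)"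
      "set_pmf D \<subseteq> X \<and> (\<forall>j<\<kappa>. fs j \<in> F) \<and> (\<forall>j<\<kappa>. e2e T (fs j) = e2e T (fs 0)) \<and> (\<forall>x. set_pmf (P x) \<subseteq> {..<\<kappa>})"
    thus "measure_pmf.prob (iid_pmf m (ids_example T D fs P))
                 {S. \<forall>h. cons_output T F \<kappa> S h \<longrightarrow>
                        measure_pmf.prob D {x. h x \<noteq> e2e T (fs 0) x} \<le> \<epsilon>} \<ge> 1 - \<delta>"
      by (rule part1)
  next
    fix F :: "(bool list \<Rightarrow> bool) set" and T \<kappa> d :: nat
    assume "T \<ge> 1" "\<kappa> \<ge> 1" "VC_dim F UNIV = enat d"
    thus "\<exists>d'::nat. VC_dim (loss_class T F \<kappa>) (UNIV \<times> {z. length z = T}) = enat d'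
              \<and> real d' \<le> 120 * real \<kappa> * real d * max 1 (ln (real \<kappa> * real T))"
      by (rule part2)
  qed
  note main = this
  show ?thesis
  proof (rule exI[of _ "120::real"], rule conjI)
    show "(0::real) < 120" by simp
  qed (rule main)
qed


end
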